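(* Suppose Assumption 1 holds with $\alpha\in(0,1]$, and let $\beta\in(0,1]$. Let $(f_t)_{t\in\mathbb N}$ be the online gradient descent iterates. Then for every $t\in\mathbb N$, $$\mathbb E_{z_t}\big[|\phi'(y_t,f_t(x_t))|^{1+\beta}\big]\le 2^{\beta}L^{1/\alpha}(1+\beta)\big[\mathcal E(f_t)-\mathcal E(f_H)\big]+\frac{2^\beta(1-\alpha\beta)}{1+\alpha}+2^\beta\,\mathbb E_{z_t}\big[|\phi'(y_t,f_H(x_t))|^{1+\beta}\big].$$
   Context: Setting: Let $\mathcal X\subset\mathbb R^d$, $\mathcal Y\subset\mathbb R$, $\mathcal Z=\mathcal X\times\mathcal Y$, and let $\rho$ be a Borel probability measure on $\mathcal Z$. Let $K:\mathcal X\times\mathcal X\to\mathbb R$ be a continuous, symmetric, positive semi-definite kernel with reproducing kernel Hilbert space $H_K$ (inner product $\langle\cdot,\cdot\rangle$, norm $\|\cdot\|$), $K_x:=K(x,\cdot)$, reproducing property $f(x)=\langle f,K_x\rangle$, and $\kappa:=\sup_{x\in\mathcal X}\sqrt{K(x,x)}<\infty$. Let $\phi:\mathcal Y\times\mathbb R\to[0,\infty)$ be a loss function, differentiable in its second argument, and write $\phi'(y,s)$ for its derivative with respect to $s$. The generalization error of $f:\mathcal X\to\mathbb R$ is $\mathcal E(f)=\int_{\mathcal Z}\phi(y,f(x))\,d\rho(x,y)$. It is assumed that a minimizer $f_H\in\arg\min_{f\in H_K}\mathcal E(f)$ exists and that $\max\{\sup_{y\in\mathcal Y}\phi(y,0),\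 \sup_{(x,y)\in\mathcal Z}\phi(y,f_H(x))\}<\infty$. Let $z_t=(x_t,y_t)$, $t\in\mathbb N$, be i.i.d. samples from $\rho$, let $(\eta_t)_{t\in\mathbb N}$ be positive step sizes, and define the online gradient descent iterates by $f_1=0$ and $f_{t+1}=f_t-\eta_t\phi'(y_t,f_t(x_t))K_{x_t}$ for $t\in\mathbb N$ (so $f_t$ depends only on $z_1,\dots,z_{t-1}$). Assumption 1: for every $y\in\mathcal Y$, $\phi(y,\cdot)$ is convex and differentiable, and there are constants $\alpha\in(0,1]$, $L>0$ with $|\phi'(y,s)-\phi'(y,\tilde s)|\le L|s-\tilde s|^{\alpha}$ for all $s,\tilde s\in\mathbb R$, $y\in\mathcal Y$. $\mathbb E_{z_t}[\cdot]$ denotes the conditional expectation with respect to $z_t$ given $z_1,\dots,z_{t-1}$ (i.e. integrating only over $z_t\sim\rho$, with $f_t$ fixed). *)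

theory Defs
  imports "HOL-Probability.Probability"
begin

definition gen_err :: "('a \<times> real) measure \<Rightarrow> (real \<Rightarrow> real \<Rightarrow> real) \<Rightarrow> ('a \<Rightarrow> real) \<Rightarrow> real" where
  "gen_err \<rho> \<phi> f = (\<integral>z. \<phi> (snd z) (f (fst z)) \<partial>\<rho>)"

text \<open>Online gradient descent iterates, indexed from 1:
  f_1 = 0,  f_(t+1) = f_t - eta_t * phi'(y_t, f_t(x_t)) * K_(x_t)  for t >= 1.
  Index 0 is an unused dummy (set to 0).\<close>
primrec ogd :: "('a \<Rightarrow> 'a \<Rightarrow> real) \<Rightarrow> (real \<Rightarrow> real \<Rightarrow> real) \<Rightarrow> (nat \<Rightarrow> real)
                 \<Rightarrow> (nat \<Rightarrow> 'a \<times> real) \<Rightarrow> nat \<Rightarrow> 'a \<Rightarrow> real" where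
  "ogd K \<phi>' \<eta> z 0 = (\<lambda>x. 0)"
| "ogd K \<phi>' \<eta> z (Suc t) =
     (if t = 0 then (\<lambda>x. 0)
      else (\<lambda>x. ogd K \<phi>' \<eta> z t x
                 - \<eta> t * \<phi>' (snd (z t)) (ogd K \<phi>' \<eta> z t (fst (z t))) * K (fst (z t)) x))"

end

theory Submission
  imports Defs
begin

lemma descent_ge:
  fixes f f' :: "real \<Rightarrow> real"
  assumes d: "\<And>u. (f has_real_derivative f' u) (at u)"
    and h: "\<And>u v. \<bar>f' u - f' v\<bar> \<le> L * \<bar>u - v\<bar> powr a"
    and a: "0 < a" and s: "s \<le> s'"
  shows "f s' \<le> f s + f' s * (s' - s) + L * \<bar>s' - s\<bar> powr (1 + a) / (1 + a)"
proof (cases "s = s'")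
  case True then show ?thesis by simp
next
  case False
  with s have lt: "s < s'" by simp
  define \<psi> where "\<psi> u = f u - f s - f' s * (u - s) - L * (u - s) powr (1 + a) / (1 + a)" for u
  have cf: "continuous_on {s..s'} f"
    using d by (meson DERIV_isCont continuous_at_imp_continuous_on)
  have cp: "continuous_on {s..s'} (\<lambda>u. (u - s) powr (1 + a))"
    using a by (intro continuous_on_powr' continuous_intros) auto
  have c: "continuous_on {s..s'} \<psi>"
    unfolding \<psi>_def
    by (intro continuous_on_diff continuous_on_mult continuous_on_const continuous_on_id cf cp continuous_on_divide) (use a in auto)
  have D: "(\<psi> has_real_derivative (f' u - f' s - L * (u - s) powr a)) (at u)" if "s < u" for u
  proof -
    have "((\<lambda>u. (u - s) powr (1 + a)) has_real_derivative (1 + a) * (u - s) powr a) (at u)"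
      using that by (auto intro!: derivative_eq_intros)
    then show ?thesis
      unfolding \<psi>_def using a that
      by (auto intro!: derivative_eq_intros d)
  qed
  obtain l x where x: "s < x" "x < s'" and Dx: "DERIV \<psi> x :> l" and eq: "\<psi> s' - \<psi> s = (s' - s) * l"
    using MVT[OF lt c] D by (meson differentiable_def real_differentiable_def)
  have "l = f' x - f' s - L * (x - s) powr a"
    using DERIV_unique[OF Dx D[OF x(1)]] .
  moreover have "f' x - f' s \<le> L * (x - s) powr a"
    using h[of x s] x by auto
  ultimately have "l \<le> 0" by simp
  with eq lt have "\<psi> s' \<le> \<psi> s" by (smt (verit) mult_nonneg_nonpos)
  moreover have "\<psi> s = 0" unfolding \<psi>_def using a by simp
  ultimately show ?thesis unfolding \<psi>_def using s by simp
qed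

lemma descent:
  fixes f f' :: "real \<Rightarrow> real"
  assumes d: "\<And>u. (f has_real_derivative f' u) (at u)"
    and h: "\<And>u v. \<bar>f' u - f' v\<bar> \<le> L * \<bar>u - v\<bar> powr a"
    and a: "0 < a"
  shows "f s' \<le> f s + f' s * (s' - s) + L * \<bar>s' - s\<bar> powr (1 + a) / (1 + a)"
proof (cases "s \<le> s'")
  case True then show ?thesis using descent_ge[OF d h a] by blast
next
  case False
  define g where "g u = f (- u)" for u
  define g' where "g' u = - f' (- u)" for u
  have dg: "(g has_real_derivative g' u) (at u)" for u
    unfolding g_def g'_def using DERIV_chain2[OF d[of "-u"] DERIV_minus[OF DERIV_ident]] by simp
  have hg: "\<bar>g' u - g' v\<bar> \<le> L * \<bar>u - v\<bar> powr a" for u v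
    unfolding g'_def using h[of "-v" "-u"] by (simp add: abs_minus_commute)
  have "g (-s') \<le> g (-s) + g' (-s) * (-s' - -s) + L * \<bar>-s' - -s\<bar> powr (1 + a) / (1 + a)"
    using False by (intro descent_ge[OF dg hg a]) auto
  then show ?thesis unfolding g_def g'_def by (simp add: abs_minus_commute algebra_simps)
qed

lemma bregman:
  fixes f f' :: "real \<Rightarrow> real"
  assumes cv: "convex_on UNIV f"
    and d: "\<And>u. (f has_real_derivative f' u) (at u)"
    and h: "\<And>u v. \<bar>f' u - f' v\<bar> \<le> L * \<bar>u - v\<bar> powr a"
    and a: "0 < a" and L: "0 < L"
  shows "\<bar>f' s - f' r\<bar> powr ((1 + a) / a) \<le> L powr (1 / a) * ((1 + a) / a) * (f s - f r - f' r * (s - r))"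
proof -
  have tan: "f x - f r \<ge> f' r * (x - r)" for x
    using convex_on_imp_above_tangent[OF cv, of r x "f' r"] d[of r] by auto
  define dd where "dd = f' s - f' r"
  define D where "D = f s - f r - f' r * (s - r)"
  define \<rho> where "\<rho> = (\<bar>dd\<bar> / L) powr (1 / a)"
  define hh where "hh = - sgn dd * \<rho>"
  have \<rho>0: "\<rho> \<ge> 0" unfolding \<rho>_def by simp
  have ahh: "\<bar>hh\<bar> = \<rho> \<or> dd = 0" unfolding hh_def using \<rho>0 by (cases dd "0::real" rule: linorder_cases) auto
  have ddhh: "dd * hh = - \<bar>dd\<bar> * \<rho>" unfolding hh_def by (cases dd "0::real" rule: linorder_cases) auto
  have \<rho>a: "\<rho> powr a = \<bar>dd\<bar> / L"
    unfolding \<rho>_def using a L by (simp add: powr_powr)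
  have \<rho>1a: "\<rho> powr (1 + a) = \<rho> * (\<bar>dd\<bar> / L)"
  proof (cases "\<rho> = 0")
    case True then show ?thesis using a by simp
  next
    case False then show ?thesis using \<rho>0 \<rho>a by (simp add: powr_add)
  qed
  have desc: "f (s + hh) \<le> f s + f' s * hh + L * \<bar>hh\<bar> powr (1 + a) / (1 + a)"
    using descent[OF d h a, where s=s and s'="s + hh"] by simp
  have "f' r * (s + hh - r) \<le> f (s + hh) - f r" using tan by simp
  have key: "0 \<le> D + dd * hh + L * \<bar>hh\<bar> powr (1 + a) / (1 + a)"
    using desc tan[of "s + hh"] unfolding D_def dd_def by (simp add: algebra_simps)
  have D0: "D \<ge> 0" using tan[of s] unfolding D_def by simp
  show ?thesis
  proof (cases "dd = 0")
    case True
    then show ?thesis using D0 a L unfolding dd_def[symmetric] D_def[symmetric] by simp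
  next
    case False
    with ahh have "\<bar>hh\<bar> = \<rho>" by simp
    with key ddhh \<rho>1a L have "0 \<le> D - \<bar>dd\<bar> * \<rho> + \<rho> * \<bar>dd\<bar> / (1 + a)" by simp
    then have k2: "\<bar>dd\<bar> * \<rho> * a / (1 + a) \<le> D" using a
      by (simp add: field_simps)
    have "\<bar>dd\<bar> powr ((1 + a) / a) = \<bar>dd\<bar> * \<bar>dd\<bar> powr (1 / a)"
      using False a by (simp add: add_divide_distrib powr_add)
    also have "\<bar>dd\<bar> powr (1 / a) = L powr (1 / a) * \<rho>"
      unfolding \<rho>_def using L by (simp add: powr_divide)
    finally have "\<bar>dd\<bar> powr ((1 + a) / a) = L powr (1 / a) * (\<bar>dd\<bar> * \<rho>)" by simp
    also have "\<dots> \<le> L powr (1 / a) * ((1 + a) / a * D)"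
      using k2 a by (intro mult_left_mono) (auto simp: field_simps)
    finally show ?thesis unfolding dd_def D_def by (simp add: mult.assoc)
  qed
qed

lemma pow_sum_le:
  fixes x y b :: real
  assumes b: "0 \<le> b"
  shows "\<bar>x + y\<bar> powr (1 + b) \<le> 2 powr b * (\<bar>x\<bar> powr (1 + b) + \<bar>y\<bar> powr (1 + b))"
proof (cases "x = 0 \<or> y = 0")
  case True
  have "1 \<le> (2::real) powr b" using b ge_one_powr_ge_zero by simp
  then show ?thesis using True
    mult_right_mono[of 1 "2 powr b" "\<bar>y\<bar> powr (1+b)"] mult_right_mono[of 1 "2 powr b" "\<bar>x\<bar> powr (1+b)"]
    by auto
next
  case False
  define u where "u = \<bar>x\<bar>"
  define v where "v = \<bar>y\<bar>"
  have u: "u > 0" and v: "v > 0" using False unfolding u_def v_def by auto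
  have cvx: "((1/2) * u + (1 - 1/2) * v) powr (1 + b) \<le> (1/2) * u powr (1 + b) + (1 - 1/2) * v powr (1 + b)"
    using convex_onD[OF powr_convex[of "1 + b"], of "1/2" u v] u v b by auto
  have "\<bar>x + y\<bar> powr (1 + b) \<le> (u + v) powr (1 + b)"
    unfolding u_def v_def using b by (intro powr_mono2) auto
  also have "(u + v) powr (1 + b) = 2 powr (1 + b) * ((1/2) * u + (1 - 1/2) * v) powr (1 + b)"
    using powr_mult[of 2 "(1/2) * u + (1 - 1/2) * v" "1 + b"] u v by simp
  also have "\<dots> \<le> 2 powr (1 + b) * ((1/2) * u powr (1 + b) + (1 - 1/2) * v powr (1 + b))"
    using cvx by (intro mult_left_mono) auto
  also have "\<dots> = 2 powr b * (u powr (1 + b) + v powr (1 + b))"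
    by (simp add: powr_add field_simps)
  finally show ?thesis unfolding u_def v_def .
qed

lemma young1:
  fixes u \<theta> :: real
  assumes "0 \<le> u" "0 < \<theta>" "\<theta> \<le> 1"
  shows "u powr \<theta> \<le> \<theta> * u + (1 - \<theta>)"
proof (cases "u = 0")
  case True then show ?thesis using assms by simp
next
  case False
  then show ?thesis using Youngs_inequality_0[of \<theta> "1 - \<theta>" u 1] assms by simp
qed

lemma pointwise:
  fixes f f' :: "real \<Rightarrow> real"
  assumes cv: "convex_on UNIV f"
    and d: "\<And>u. (f has_real_derivative f' u) (at u)"
    and h: "\<And>u v. \<bar>f' u - f' v\<bar> \<le> L * \<bar>u - v\<bar> powr a"
    and a: "0 < a" "a \<le> 1" and L: "0 < L" and b: "0 < b" "b \<le> 1"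
  shows "\<bar>f' s\<bar> powr (1 + b) \<le> 2 powr b * L powr (1 / a) * (1 + b) * (f s - f r - f' r * (s - r))
           + 2 powr b * (1 - a * b) / (1 + a) + 2 powr b * \<bar>f' r\<bar> powr (1 + b)"
proof -
  define dd where "dd = f' s - f' r"
  define D where "D = f s - f r - f' r * (s - r)"
  define \<theta> where "\<theta> = a * (1 + b) / (1 + a)"
  have \<theta>: "0 < \<theta>" "\<theta> \<le> 1" unfolding \<theta>_def using a b by (auto simp: field_simps intro: mult_le_one add_pos_nonneg)
  have B: "\<bar>dd\<bar> powr ((1 + a) / a) \<le> L powr (1 / a) * ((1 + a) / a) * D"
    unfolding dd_def D_def by (rule bregman[OF cv d h a(1) L])
  have "\<bar>dd\<bar> powr (1 + b) = (\<bar>dd\<bar> powr ((1 + a) / a)) powr \<theta>"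
    unfolding \<theta>_def using a by (simp add: powr_powr)
  also have "\<dots> \<le> \<theta> * \<bar>dd\<bar> powr ((1 + a) / a) + (1 - \<theta>)"
    by (rule young1) (use \<theta> in auto)
  also have "\<dots> \<le> \<theta> * (L powr (1 / a) * ((1 + a) / a) * D) + (1 - \<theta>)"
    using B \<theta> by (intro add_right_mono mult_left_mono) auto
  also have "\<dots> = (\<theta> * ((1 + a) / a)) * L powr (1 / a) * D + (1 - \<theta>)"
    by (simp add: ac_simps)
  also have "\<theta> * ((1 + a) / a) = 1 + b"
  proof -
    have "a \<noteq> 0" "1 + a \<noteq> 0" using a by auto
    then show ?thesis unfolding \<theta>_def by simp
  qed
  also have "1 - \<theta> = (1 - a * b) / (1 + a)" unfolding \<theta>_def using a by (simp add: field_simps)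
  also have "(1 + b) * L powr (1 / a) * D = L powr (1 / a) * (1 + b) * D" by simp
  finally have E: "\<bar>dd\<bar> powr (1 + b) \<le> L powr (1 / a) * (1 + b) * D + (1 - a * b) / (1 + a)" .
  have "\<bar>f' s\<bar> powr (1 + b) \<le> 2 powr b * (\<bar>dd\<bar> powr (1 + b) + \<bar>f' r\<bar> powr (1 + b))"
    using pow_sum_le[of b dd "f' r"] b unfolding dd_def by simp
  also have "\<dots> \<le> 2 powr b * (L powr (1 / a) * (1 + b) * D + (1 - a * b) / (1 + a) + \<bar>f' r\<bar> powr (1 + b))"
    using E by (intro mult_left_mono) auto
  finally show ?thesis unfolding D_def by (simp add: algebra_simps)
qed

lemma deriv_meas:
  fixes \<phi> \<phi>' :: "real \<Rightarrow> real \<Rightarrow> real"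
  assumes \<phi>_meas: "(\<lambda>(y, s). \<phi> y s) \<in> borel_measurable (restrict_space borel (Y \<times> UNIV))"
    and \<phi>_deriv: "\<And>y s. y \<in> Y \<Longrightarrow> (\<phi> y has_real_derivative \<phi>' y s) (at s)"
  shows "(\<lambda>(y, s). \<phi>' y s) \<in> borel_measurable (restrict_space borel (Y \<times> UNIV))"
proof (rule borel_measurable_LIMSEQ_real)
  define N where "N = restrict_space borel (Y \<times> (UNIV::real set))"
  have shift: "(\<lambda>(y, s). \<phi> y (s + c)) \<in> borel_measurable N" for c :: real
  proof -
    have m: "(\<lambda>p::real\<times>real. (fst p, snd p + c)) \<in> measurable N N"
      unfolding N_def by (intro measurable_restrict_space3 borel_measurable_continuous_onI continuous_intros) auto
    have "(\<lambda>p. (\<lambda>(y, s). \<phi> y s) ((\<lambda>p::real\<times>real. (fst p, snd p + c)) p)) \<in> borel_measurable N"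
      using measurable_comp[OF m \<phi>_meas[folded N_def]] by (simp add: comp_def)
    then show ?thesis by (simp add: case_prod_beta)
  qed
  show "(\<lambda>(y, s). real (Suc n) * (\<phi> y (s + 1 / real (Suc n)) - \<phi> y (s + 0))) \<in> borel_measurable (restrict_space borel (Y \<times> UNIV))" for n
  proof -
    have "(\<lambda>p. real (Suc n) * ((\<lambda>(y, s). \<phi> y (s + 1 / real (Suc n))) p - (\<lambda>(y, s). \<phi> y (s + 0)) p)) \<in> borel_measurable N"
      by (intro borel_measurable_times borel_measurable_const borel_measurable_diff shift)
    then show ?thesis unfolding N_def by (simp add: case_prod_beta)
  qed
  fix p :: "real \<times> real" assume "p \<in> space (restrict_space borel (Y \<times> UNIV))"
  then have y: "fst p \<in> Y" by (auto simp: space_restrict_space)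
  have L: "((\<lambda>h. (\<phi> (fst p) (snd p + h) - \<phi> (fst p) (snd p)) / h) \<longlongrightarrow> \<phi>' (fst p) (snd p)) (at 0)"
    using \<phi>_deriv[OF y, of "snd p"] by (simp add: DERIV_def)
  have S: "(\<lambda>n. 1 / real (Suc n)) \<longlonglongrightarrow> 0" by (rule LIMSEQ_Suc[OF lim_const_over_n])
  have "(\<lambda>n. (\<phi> (fst p) (snd p + 1 / real (Suc n)) - \<phi> (fst p) (snd p)) / (1 / real (Suc n))) \<longlonglongrightarrow> \<phi>' (fst p) (snd p)"
    using L[unfolded LIMSEQ_SEQ_conv[symmetric], rule_format, of "\<lambda>n. 1 / real (Suc n)"] S by auto
  then show "(\<lambda>n. (\<lambda>(y, s). real (Suc n) * (\<phi> y (s + 1 / real (Suc n)) - \<phi> y (s + 0))) p) \<longlonglongrightarrow> (\<lambda>(y, s). \<phi>' y s) p"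
    by (simp add: case_prod_beta mult.commute)
qed

primrec ogdw :: "('x \<Rightarrow> 'h::real_inner) \<Rightarrow> (real \<Rightarrow> real \<Rightarrow> real) \<Rightarrow> (nat \<Rightarrow> real)
                 \<Rightarrow> (nat \<Rightarrow> 'x \<times> real) \<Rightarrow> nat \<Rightarrow> 'h" where
  "ogdw \<Phi> \<phi>' \<eta> z 0 = 0"
| "ogdw \<Phi> \<phi>' \<eta> z (Suc t) =
     (if t = 0 then 0
      else ogdw \<Phi> \<phi>' \<eta> z t - (\<eta> t * \<phi>' (snd (z t)) (ogdw \<Phi> \<phi>' \<eta> z t \<bullet> \<Phi> (fst (z t)))) *\<^sub>R \<Phi> (fst (z t)))"

lemma ogd_rep:
  assumes K: "\<And>x x'. x \<in> X \<Longrightarrow> x' \<in> X \<Longrightarrow> K x x' = \<Phi> x \<bullet> \<Phi> x'"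
    and z: "\<And>i. fst (z i) \<in> X" and x: "x \<in> X"
  shows "ogd K \<phi>' \<eta> z t x = ogdw \<Phi> \<phi>' \<eta> z t \<bullet> \<Phi> x"
  using x
proof (induction t arbitrary: x)
  case 0 then show ?case by simp
next
  case (Suc t)
  show ?case
    using Suc.IH[OF z] Suc.IH[OF Suc.prems] K[OF z Suc.prems]
    by (simp add: inner_diff_left)
qed

lemma Phi_cont_lemma:
  fixes \<Phi> :: "'x::topological_space \<Rightarrow> 'h::real_inner"
  assumes K_feat: "\<And>x x'. x \<in> X \<Longrightarrow> x' \<in> X \<Longrightarrow> K x x' = \<Phi> x \<bullet> \<Phi> x'"
    and K_cont: "continuous_on (X \<times> X) (\<lambda>(x, x'). K x x')"
  shows "continuous_on X \<Phi>"
proof -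
  have Kdiag: "continuous_on X (\<lambda>x. K x x)"
  proof -
    have "continuous_on X (\<lambda>x. (x, x))" by (intro continuous_intros)
    moreover have "(\<lambda>x. (x, x)) ` X \<subseteq> X \<times> X" by auto
    ultimately show ?thesis using continuous_on_compose2[OF K_cont, of X "\<lambda>x. (x, x)"] by simp
  qed
  have Kx0: "continuous_on X (\<lambda>x. K x x0)" if "x0 \<in> X" for x0
  proof -
    have "continuous_on X (\<lambda>x. (x, x0))" by (intro continuous_intros)
    moreover have "(\<lambda>x. (x, x0)) ` X \<subseteq> X \<times> X" using that by auto
    ultimately show ?thesis using continuous_on_compose2[OF K_cont, of X "\<lambda>x. (x, x0)"] by simp
  qed
  show ?thesis
    unfolding continuous_on_def
  proof (intro ballI)
    fix x0 assume x0: "x0 \<in> X"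
    have kc: "continuous_on X (\<lambda>x. K x x - 2 * K x x0 + K x0 x0)"
      by (intro continuous_on_add continuous_on_diff continuous_on_mult continuous_on_const Kdiag Kx0 x0)
    have eq: "(norm (\<Phi> x - \<Phi> x0))\<^sup>2 = K x x - 2 * K x x0 + K x0 x0" if "x \<in> X" for x
    proof -
      have "(norm (\<Phi> x - \<Phi> x0))\<^sup>2 = (\<Phi> x - \<Phi> x0) \<bullet> (\<Phi> x - \<Phi> x0)" by (rule power2_norm_eq_inner)
      also have "\<dots> = \<Phi> x \<bullet> \<Phi> x - 2 * (\<Phi> x \<bullet> \<Phi> x0) + \<Phi> x0 \<bullet> \<Phi> x0"
        by (simp add: inner_diff_left inner_diff_right inner_commute[of "\<Phi> x0" "\<Phi> x"])
      finally show ?thesis using K_feat[OF that that] K_feat[OF that x0] K_feat[OF x0 x0] by (simp only:)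
    qed
    have cN: "continuous_on X (\<lambda>x. (norm (\<Phi> x - \<Phi> x0))\<^sup>2)"
      using iffD2[OF continuous_on_cong[OF refl eq] kc] .
    have "((\<lambda>x. (norm (\<Phi> x - \<Phi> x0))\<^sup>2) \<longlongrightarrow> (norm (\<Phi> x0 - \<Phi> x0))\<^sup>2) (at x0 within X)"
      using cN[unfolded continuous_on_def, rule_format, OF x0] .
    then have "((\<lambda>x. (norm (\<Phi> x - \<Phi> x0))\<^sup>2) \<longlongrightarrow> 0) (at x0 within X)" by simp
    then have "((\<lambda>x. sqrt ((norm (\<Phi> x - \<Phi> x0))\<^sup>2)) \<longlongrightarrow> sqrt 0) (at x0 within X)"
      by (rule tendsto_real_sqrt)
    then have "((\<lambda>x. norm (\<Phi> x - \<Phi> x0)) \<longlongrightarrow> 0) (at x0 within X)" by simp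
    then have "((\<lambda>x. \<Phi> x - \<Phi> x0) \<longlongrightarrow> 0) (at x0 within X)"
      by (simp add: tendsto_norm_zero_iff)
    then show "(\<Phi> \<longlongrightarrow> \<Phi> x0) (at x0 within X)"
      by (simp add: LIM_zero_iff)
  qed
qed


theorem lemma2:
  fixes X :: "(real^'d) set" and Y :: "real set"
    and \<rho> :: "((real^'d) \<times> real) measure"
    and K :: "real^'d \<Rightarrow> real^'d \<Rightarrow> real"
    and \<Phi> :: "real^'d \<Rightarrow> 'h::{real_inner, complete_space}"
    and \<phi> \<phi>' :: "real \<Rightarrow> real \<Rightarrow> real"
    and wH :: 'h
    and \<eta> :: "nat \<Rightarrow> real"
    and z :: "nat \<Rightarrow> (real^'d) \<times> real"
    and \<alpha> \<beta> L :: real and t :: nat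
  assumes prob: "prob_space \<rho>"
    and sets_\<rho>: "sets \<rho> = sets (restrict_space borel (X \<times> Y))"
    \<comment> \<open>RKHS H_K, given through a feature map: K x x' = <Phi x, Phi x'>, with the span of
        Phi(X) dense, so H_K = { x \<mapsto> <w, Phi x> | w }\<close>
    and K_feat: "\<And>x x'. x \<in> X \<Longrightarrow> x' \<in> X \<Longrightarrow> K x x' = \<Phi> x \<bullet> \<Phi> x'"
    and dense: "closure (span (\<Phi> ` X)) = UNIV"
    and K_cont: "continuous_on (X \<times> X) (\<lambda>(x, x'). K x x')"
    and kappa: "bounded ((\<lambda>x. sqrt (K x x)) ` X)"
    \<comment> \<open>loss\<close>
    and \<phi>_nonneg: "\<And>y s. y \<in> Y \<Longrightarrow> \<phi> y s \<ge> 0"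
    and \<phi>_meas: "(\<lambda>(y, s). \<phi> y s) \<in> borel_measurable (restrict_space borel (Y \<times> UNIV))"
    \<comment> \<open>Assumption 1\<close>
    and \<phi>_convex: "\<And>y. y \<in> Y \<Longrightarrow> convex_on UNIV (\<phi> y)"
    and \<phi>_deriv: "\<And>y s. y \<in> Y \<Longrightarrow> (\<phi> y has_real_derivative \<phi>' y s) (at s)"
    and \<alpha>: "0 < \<alpha>" "\<alpha> \<le> 1" and L: "L > 0"
    and hoelder: "\<And>y s s'. y \<in> Y \<Longrightarrow> \<bar>\<phi>' y s - \<phi>' y s'\<bar> \<le> L * \<bar>s - s'\<bar> powr \<alpha>"
    \<comment> \<open>minimizer f_H of E over H_K\<close>
    and fH_min: "\<And>w. gen_err \<rho> \<phi> (\<lambda>x. wH \<bullet> \<Phi> x) \<le> gen_err \<rho> \<phi> (\<lambda>x. w \<bullet> \<Phi> x)"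
    and bdd0: "\<exists>B. \<forall>y\<in>Y. \<phi> y 0 \<le> B"
    and bddH: "\<exists>B. \<forall>x\<in>X. \<forall>y\<in>Y. \<phi> y (wH \<bullet> \<Phi> x) \<le> B"
    \<comment> \<open>parameters, step sizes and sample path\<close>
    and \<beta>: "0 < \<beta>" "\<beta> \<le> 1"
    and \<eta>_pos: "\<And>i. \<eta> i > 0"
    and z_in: "\<And>i. z i \<in> X \<times> Y"
    and t: "t \<ge> 1"
  shows "(\<integral>\<zeta>. \<bar>\<phi>' (snd \<zeta>) (ogd K \<phi>' \<eta> z t (fst \<zeta>))\<bar> powr (1 + \<beta>) \<partial>\<rho>)
         \<le> 2 powr \<beta> * L powr (1 / \<alpha>) * (1 + \<beta>)
             * (gen_err \<rho> \<phi> (ogd K \<phi>' \<eta> z t) - gen_err \<rho> \<phi> (\<lambda>x. wH \<bullet> \<Phi> x))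
           + 2 powr \<beta> * (1 - \<alpha> * \<beta>) / (1 + \<alpha>)
           + 2 powr \<beta> * (\<integral>\<zeta>. \<bar>\<phi>' (snd \<zeta>) (wH \<bullet> \<Phi> (fst \<zeta>))\<bar> powr (1 + \<beta>) \<partial>\<rho>)"
proof -
  interpret prob_space \<rho> by (rule prob)
  have sp: "space \<rho> = X \<times> Y"
    using sets_eq_imp_space_eq[OF sets_\<rho>] by (simp add: space_restrict_space)
  have spX: "fst \<zeta> \<in> X" and spY: "snd \<zeta> \<in> Y" if "\<zeta> \<in> space \<rho>" for \<zeta>
    using that by (simp_all only: sp mem_Times_iff)
  have nPhi: "norm (\<Phi> x) = sqrt (K x x)" if "x \<in> X" for x
    using K_feat[OF that that] by (metis norm_eq_sqrt_inner)
  obtain a where a: "\<And>x. x \<in> X \<Longrightarrow> \<bar>sqrt (K x x)\<bar> \<le> a"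
    using kappa unfolding bounded_iff by auto
  define C where "C = max a 0"
  have C0: "0 \<le> C" unfolding C_def by simp
  have C: "norm (\<Phi> x) \<le> C" if "x \<in> X" for x
    using a[OF that] nPhi[OF that] unfolding C_def by simp
  have gbound: "\<bar>w \<bullet> \<Phi> x\<bar> \<le> norm w * C" if "x \<in> X" for w x
  proof -
    have "\<bar>w \<bullet> \<Phi> x\<bar> \<le> norm w * norm (\<Phi> x)" by (rule Cauchy_Schwarz_ineq2)
    also have "\<dots> \<le> norm w * C" using C[OF that] by (intro mult_left_mono) auto
    finally show ?thesis .
  qed
  have Kdiag: "continuous_on X (\<lambda>x. K x x)"
  proof -
    have "continuous_on X (\<lambda>x. (x, x))" by (intro continuous_intros)
    moreover have "(\<lambda>x. (x, x)) ` X \<subseteq> X \<times> X" by auto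
    ultimately show ?thesis using continuous_on_compose2[OF K_cont, of X "\<lambda>x. (x, x)"] by simp
  qed
  have Kx0: "continuous_on X (\<lambda>x. K x x0)" if "x0 \<in> X" for x0
  proof -
    have "continuous_on X (\<lambda>x. (x, x0))" by (intro continuous_intros)
    moreover have "(\<lambda>x. (x, x0)) ` X \<subseteq> X \<times> X" using that by auto
    ultimately show ?thesis using continuous_on_compose2[OF K_cont, of X "\<lambda>x. (x, x0)"] by simp
  qed
  have Phi_cont: "continuous_on X \<Phi>" by (rule Phi_cont_lemma[OF K_feat K_cont])
  have gcont: "continuous_on X (\<lambda>x. w \<bullet> \<Phi> x)" for w
    by (intro continuous_intros Phi_cont)
  have \<phi>'_meas: "(\<lambda>(y, s). \<phi>' y s) \<in> borel_measurable (restrict_space borel (Y \<times> UNIV))"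
    by (rule deriv_meas[OF \<phi>_meas \<phi>_deriv])
  have gfc: "continuous_on (X \<times> Y) (\<lambda>\<zeta>. w \<bullet> \<Phi> (fst \<zeta>))" for w
    by (rule continuous_on_compose2[OF gcont[of w] continuous_on_fst]) auto
  have mc1: "measurable \<rho> (borel::real measure) = measurable (restrict_space borel (X \<times> Y)) borel"
    by (rule measurable_cong_sets[OF sets_\<rho> refl])
  have mc2: "measurable \<rho> (borel::(real\<times>real) measure) = measurable (restrict_space borel (X \<times> Y)) borel"
    by (rule measurable_cong_sets[OF sets_\<rho> refl])
  have mg: "(\<lambda>\<zeta>. w \<bullet> \<Phi> (fst \<zeta>)) \<in> borel_measurable \<rho>" for w
    using borel_measurable_continuous_on_restrict[OF gfc[of w]] mc1 by simp
  have mapm: "(\<lambda>\<zeta>. (snd \<zeta>, w \<bullet> \<Phi> (fst \<zeta>))) \<in> measurable \<rho> (restrict_space borel (Y \<times> UNIV))" for w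
  proof (rule measurable_restrict_space2)
    show "(\<lambda>\<zeta>. (snd \<zeta>, w \<bullet> \<Phi> (fst \<zeta>))) \<in> space \<rho> \<rightarrow> Y \<times> UNIV"
      using spY by auto
    have "continuous_on (X \<times> Y) (\<lambda>\<zeta>. (snd \<zeta>, w \<bullet> \<Phi> (fst \<zeta>)))"
      by (intro continuous_on_Pair continuous_on_snd gfc continuous_on_id)
    from borel_measurable_continuous_on_restrict[OF this]
    show "(\<lambda>\<zeta>. (snd \<zeta>, w \<bullet> \<Phi> (fst \<zeta>))) \<in> borel_measurable \<rho>"
      using mc2 by simp
  qed
  have m\<phi>: "(\<lambda>\<zeta>. \<phi> (snd \<zeta>) (w \<bullet> \<Phi> (fst \<zeta>))) \<in> borel_measurable \<rho>" for w
    using measurable_comp[OF mapm \<phi>_meas] by (simp add: comp_def)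
  have m\<phi>': "(\<lambda>\<zeta>. \<phi>' (snd \<zeta>) (w \<bullet> \<Phi> (fst \<zeta>))) \<in> borel_measurable \<rho>" for w
    using measurable_comp[OF mapm \<phi>'_meas] by (simp add: comp_def)
  obtain B0 where B0: "\<And>y. y \<in> Y \<Longrightarrow> \<phi> y 0 \<le> B0" using bdd0 by blast
  have desc: "\<phi> y v \<le> \<phi> y u + \<phi>' y u * (v - u) + L * \<bar>v - u\<bar> powr (1 + \<alpha>) / (1 + \<alpha>)"
    if "y \<in> Y" for y u v
    by (rule descent[OF \<phi>_deriv[OF that] hoelder[OF that] \<alpha>(1)])
  have d0: "\<bar>\<phi>' y 0\<bar> \<le> B0 + L" if y: "y \<in> Y" for y
  proof -
    have la: "L / (1 + \<alpha>) \<le> L" using L \<alpha> by (simp add: field_simps)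
    have "0 \<le> \<phi> y 1" "0 \<le> \<phi> y (-1)" using \<phi>_nonneg[OF y] by auto
    moreover have "\<phi> y 1 \<le> \<phi> y 0 + \<phi>' y 0 + L / (1 + \<alpha>)" using desc[OF y, of 1 0] by simp
    moreover have "\<phi> y (-1) \<le> \<phi> y 0 - \<phi>' y 0 + L / (1 + \<alpha>)" using desc[OF y, of "-1" 0] by simp
    ultimately show ?thesis using B0[OF y] la by linarith
  qed
  have bnd: "\<exists>M. \<forall>y\<in>Y. \<forall>s. \<bar>s\<bar> \<le> G \<longrightarrow> \<bar>\<phi> y s\<bar> \<le> M \<and> \<bar>\<phi>' y s\<bar> \<le> M" if G: "G \<ge> 0" for G
  proof (intro exI[of _ "max (B0 + L + L * G powr \<alpha>) (B0 + (B0 + L) * G + L * G powr (1 + \<alpha>))"] ballI allI impI)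
    fix y s assume y: "y \<in> Y" and s: "\<bar>s\<bar> \<le> G"
    have p1: "\<bar>s\<bar> powr \<alpha> \<le> G powr \<alpha>" using s \<alpha> by (intro powr_mono2) auto
    have p2: "\<bar>s\<bar> powr (1 + \<alpha>) \<le> G powr (1 + \<alpha>)" using s \<alpha> by (intro powr_mono2) auto
    have "\<bar>\<phi>' y s\<bar> \<le> \<bar>\<phi>' y 0\<bar> + \<bar>\<phi>' y s - \<phi>' y 0\<bar>" by linarith
    also have "\<dots> \<le> B0 + L + L * G powr \<alpha>"
    proof -
      have "\<bar>\<phi>' y s - \<phi>' y 0\<bar> \<le> L * \<bar>s\<bar> powr \<alpha>" using hoelder[OF y, of s 0] by simp
      also have "\<dots> \<le> L * G powr \<alpha>" using mult_left_mono[OF p1, of L] L by simp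
      finally show ?thesis using d0[OF y] by linarith
    qed
    finally have A: "\<bar>\<phi>' y s\<bar> \<le> B0 + L + L * G powr \<alpha>" .
    have "\<phi> y s \<le> \<phi> y 0 + \<phi>' y 0 * s + L * \<bar>s\<bar> powr (1 + \<alpha>) / (1 + \<alpha>)"
      using desc[OF y, of s 0] by simp
    also have "\<phi>' y 0 * s \<le> (B0 + L) * G"
    proof -
      have "\<phi>' y 0 * s \<le> \<bar>\<phi>' y 0\<bar> * \<bar>s\<bar>" by (simp add: abs_mult[symmetric])
      also have "\<dots> \<le> (B0 + L) * G" by (rule mult_mono) (use d0[OF y] s in auto)
      finally show ?thesis .
    qed
    also have "L * \<bar>s\<bar> powr (1 + \<alpha>) / (1 + \<alpha>) \<le> L * G powr (1 + \<alpha>)"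
    proof -
      have "L * \<bar>s\<bar> powr (1 + \<alpha>) / (1 + \<alpha>) \<le> L * \<bar>s\<bar> powr (1 + \<alpha>)"
        using L \<alpha> by (intro divide_left_mono[of 1 "1 + \<alpha>", simplified]) auto
      also have "\<dots> \<le> L * G powr (1 + \<alpha>)" using p2 L by simp
      finally show ?thesis .
    qed
    finally have Bp: "\<phi> y s \<le> B0 + (B0 + L) * G + L * G powr (1 + \<alpha>)" using B0[OF y] by linarith
    have "\<bar>\<phi> y s\<bar> = \<phi> y s" using \<phi>_nonneg[OF y] by simp
    with Bp A show "\<bar>\<phi> y s\<bar> \<le> max (B0 + L + L * G powr \<alpha>) (B0 + (B0 + L) * G + L * G powr (1 + \<alpha>))
         \<and> \<bar>\<phi>' y s\<bar> \<le> max (B0 + L + L * G powr \<alpha>) (B0 + (B0 + L) * G + L * G powr (1 + \<alpha>))"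
      by linarith
  qed
  have bndw: "\<exists>M. \<forall>\<zeta>\<in>space \<rho>. \<bar>w \<bullet> \<Phi> (fst \<zeta>)\<bar> \<le> M \<and> \<bar>\<phi> (snd \<zeta>) (w \<bullet> \<Phi> (fst \<zeta>))\<bar> \<le> M
        \<and> \<bar>\<phi>' (snd \<zeta>) (w \<bullet> \<Phi> (fst \<zeta>))\<bar> \<le> M" for w
  proof -
    obtain M where M: "\<forall>y\<in>Y. \<forall>s. \<bar>s\<bar> \<le> norm w * C \<longrightarrow> \<bar>\<phi> y s\<bar> \<le> M \<and> \<bar>\<phi>' y s\<bar> \<le> M"
      using bnd[of "norm w * C"] C0 by auto
    show ?thesis
  proof (intro exI[of _ "max M (norm w * C)"] ballI)
    fix \<zeta> assume z: "\<zeta> \<in> space \<rho>"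
    have "\<bar>w \<bullet> \<Phi> (fst \<zeta>)\<bar> \<le> norm w * C" by (rule gbound[OF spX[OF z]])
    with M spY[OF z] show "\<bar>w \<bullet> \<Phi> (fst \<zeta>)\<bar> \<le> max M (norm w * C) \<and> \<bar>\<phi> (snd \<zeta>) (w \<bullet> \<Phi> (fst \<zeta>))\<bar> \<le> max M (norm w * C)
        \<and> \<bar>\<phi>' (snd \<zeta>) (w \<bullet> \<Phi> (fst \<zeta>))\<bar> \<le> max M (norm w * C)"
      by (meson max.coboundedI1 max.coboundedI2)
  qed
  qed
  have intb: "integrable \<rho> f" if "f \<in> borel_measurable \<rho>" "\<forall>\<zeta>\<in>space \<rho>. \<bar>f \<zeta>\<bar> \<le> M" for f :: "_ \<Rightarrow> real" and M :: real
    by (rule integrable_const_bound[where B=M]) (use that in \<open>auto intro!: AE_I2\<close>)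
  have i\<phi>: "integrable \<rho> (\<lambda>\<zeta>. \<phi> (snd \<zeta>) (w \<bullet> \<Phi> (fst \<zeta>)))" for w
  proof -
    obtain M where M: "\<forall>\<zeta>\<in>space \<rho>. \<bar>w \<bullet> \<Phi> (fst \<zeta>)\<bar> \<le> M \<and> \<bar>\<phi> (snd \<zeta>) (w \<bullet> \<Phi> (fst \<zeta>))\<bar> \<le> M
        \<and> \<bar>\<phi>' (snd \<zeta>) (w \<bullet> \<Phi> (fst \<zeta>))\<bar> \<le> M" using bndw[of w] by blast
    show ?thesis apply (rule intb[OF m\<phi>]) using M by blast
  qed
  have ipw: "integrable \<rho> (\<lambda>\<zeta>. \<bar>\<phi>' (snd \<zeta>) (w \<bullet> \<Phi> (fst \<zeta>))\<bar> powr (1 + \<beta>))" for w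
  proof -
    obtain M where M: "\<forall>\<zeta>\<in>space \<rho>. \<bar>w \<bullet> \<Phi> (fst \<zeta>)\<bar> \<le> M \<and> \<bar>\<phi> (snd \<zeta>) (w \<bullet> \<Phi> (fst \<zeta>))\<bar> \<le> M
        \<and> \<bar>\<phi>' (snd \<zeta>) (w \<bullet> \<Phi> (fst \<zeta>))\<bar> \<le> M" using bndw[of w] by blast
    have m: "(\<lambda>\<zeta>. \<bar>\<phi>' (snd \<zeta>) (w \<bullet> \<Phi> (fst \<zeta>))\<bar> powr (1 + \<beta>)) \<in> borel_measurable \<rho>"
      by (rule measurable_abs_powr[OF m\<phi>']) 
    show ?thesis
    proof (rule intb[OF m])
      show "\<forall>\<zeta>\<in>space \<rho>. \<bar>\<bar>\<phi>' (snd \<zeta>) (w \<bullet> \<Phi> (fst \<zeta>))\<bar> powr (1 + \<beta>)\<bar> \<le> M powr (1 + \<beta>)"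
      proof
        fix \<zeta> assume z: "\<zeta> \<in> space \<rho>"
        have "\<bar>\<phi>' (snd \<zeta>) (w \<bullet> \<Phi> (fst \<zeta>))\<bar> powr (1 + \<beta>) \<le> M powr (1 + \<beta>)"
          using M z \<beta> by (intro powr_mono2) auto
        then show "\<bar>\<bar>\<phi>' (snd \<zeta>) (w \<bullet> \<Phi> (fst \<zeta>))\<bar> powr (1 + \<beta>)\<bar> \<le> M powr (1 + \<beta>)" by simp
      qed
    qed
  qed
  have iprod: "integrable \<rho> (\<lambda>\<zeta>. \<phi>' (snd \<zeta>) (wH \<bullet> \<Phi> (fst \<zeta>)) * (v \<bullet> \<Phi> (fst \<zeta>)))" for v
  proof -
    obtain M where M: "\<forall>\<zeta>\<in>space \<rho>. \<bar>wH \<bullet> \<Phi> (fst \<zeta>)\<bar> \<le> M \<and> \<bar>\<phi> (snd \<zeta>) (wH \<bullet> \<Phi> (fst \<zeta>))\<bar> \<le> M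
        \<and> \<bar>\<phi>' (snd \<zeta>) (wH \<bullet> \<Phi> (fst \<zeta>))\<bar> \<le> M" using bndw[of wH] by blast
    obtain M2 where M2: "\<forall>\<zeta>\<in>space \<rho>. \<bar>v \<bullet> \<Phi> (fst \<zeta>)\<bar> \<le> M2 \<and> \<bar>\<phi> (snd \<zeta>) (v \<bullet> \<Phi> (fst \<zeta>))\<bar> \<le> M2
        \<and> \<bar>\<phi>' (snd \<zeta>) (v \<bullet> \<Phi> (fst \<zeta>))\<bar> \<le> M2" using bndw[of v] by blast
    show ?thesis
    proof (rule intb[OF borel_measurable_times[OF m\<phi>' mg]])
      show "\<forall>\<zeta>\<in>space \<rho>. \<bar>\<phi>' (snd \<zeta>) (wH \<bullet> \<Phi> (fst \<zeta>)) * (v \<bullet> \<Phi> (fst \<zeta>))\<bar> \<le> M * M2"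
      proof
        fix \<zeta> assume z: "\<zeta> \<in> space \<rho>"
        have "\<bar>\<phi>' (snd \<zeta>) (wH \<bullet> \<Phi> (fst \<zeta>))\<bar> * \<bar>v \<bullet> \<Phi> (fst \<zeta>)\<bar> \<le> M * M2"
          using M z M2 by (intro mult_mono) auto
        then show "\<bar>\<phi>' (snd \<zeta>) (wH \<bullet> \<Phi> (fst \<zeta>)) * (v \<bullet> \<Phi> (fst \<zeta>))\<bar> \<le> M * M2"
          by (simp add: abs_mult)
      qed
    qed
  qed
  have intc: "(\<integral>\<zeta>. c \<partial>\<rho>) = c" for c :: real
    by (simp add: prob_space)
  \<comment> \<open>first-order optimality of f_H\<close>
  have ge: "0 \<le> (\<integral>\<zeta>. \<phi>' (snd \<zeta>) (wH \<bullet> \<Phi> (fst \<zeta>)) * (v \<bullet> \<Phi> (fst \<zeta>)) \<partial>\<rho>)" for v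
  proof -
    define c where "c = (\<integral>\<zeta>. \<phi>' (snd \<zeta>) (wH \<bullet> \<Phi> (fst \<zeta>)) * (v \<bullet> \<Phi> (fst \<zeta>)) \<partial>\<rho>)"
    define G where "G = norm v * C"
    have G0: "0 \<le> G" unfolding G_def using C0 by simp
    have key: "- c \<le> L * (\<epsilon> * G) powr \<alpha> * G" if \<epsilon>: "0 < \<epsilon>" for \<epsilon>
    proof -
      define w' where "w' = wH + \<epsilon> *\<^sub>R v"
      have pt: "\<phi> (snd \<zeta>) (w' \<bullet> \<Phi> (fst \<zeta>)) - \<phi> (snd \<zeta>) (wH \<bullet> \<Phi> (fst \<zeta>))
                 - \<epsilon> * (\<phi>' (snd \<zeta>) (wH \<bullet> \<Phi> (fst \<zeta>)) * (v \<bullet> \<Phi> (fst \<zeta>)))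
               \<le> \<epsilon> * (L * (\<epsilon> * G) powr \<alpha> * G)" if z: "\<zeta> \<in> space \<rho>" for \<zeta>
      proof -
        define y where "y = snd \<zeta>"
        define a where "a = wH \<bullet> \<Phi> (fst \<zeta>)"
        define g where "g = v \<bullet> \<Phi> (fst \<zeta>)"
        have y: "y \<in> Y" unfolding y_def by (rule spY[OF z])
        have gG: "\<bar>g\<bar> \<le> G" unfolding g_def G_def by (rule gbound[OF spX[OF z]])
        have w'eq: "w' \<bullet> \<Phi> (fst \<zeta>) = a + \<epsilon> * g"
          unfolding w'_def a_def g_def by (simp add: inner_add_left)
        have tan: "\<phi> y a - \<phi> y (a + \<epsilon> * g) \<ge> \<phi>' y (a + \<epsilon> * g) * (a - (a + \<epsilon> * g))"
          using convex_on_imp_above_tangent[OF \<phi>_convex[OF y], of "a + \<epsilon> * g" a "\<phi>' y (a + \<epsilon> * g)"]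
            \<phi>_deriv[OF y, of "a + \<epsilon> * g"] by auto
        have "\<bar>\<epsilon> * g\<bar> powr \<alpha> \<le> (\<epsilon> * G) powr \<alpha>"
          using \<epsilon> gG \<alpha> by (intro powr_mono2) (auto simp: abs_mult)
        then have h1: "\<bar>\<phi>' y (a + \<epsilon> * g) - \<phi>' y a\<bar> \<le> L * (\<epsilon> * G) powr \<alpha>"
          using hoelder[OF y, of "a + \<epsilon> * g" a] L by (smt (verit) mult_left_mono)
        have "g * (\<phi>' y (a + \<epsilon> * g) - \<phi>' y a) \<le> \<bar>g\<bar> * \<bar>\<phi>' y (a + \<epsilon> * g) - \<phi>' y a\<bar>"
          by (simp add: abs_mult[symmetric])
        also have "\<dots> \<le> G * (L * (\<epsilon> * G) powr \<alpha>)"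
          using gG h1 by (intro mult_mono) auto
        finally have h2: "g * \<phi>' y (a + \<epsilon> * g) \<le> g * \<phi>' y a + L * (\<epsilon> * G) powr \<alpha> * G"
          by (simp add: algebra_simps)
        have "\<phi> y (a + \<epsilon> * g) - \<phi> y a \<le> \<epsilon> * (g * \<phi>' y (a + \<epsilon> * g))"
          using tan by (simp add: algebra_simps)
        also have "\<dots> \<le> \<epsilon> * (g * \<phi>' y a + L * (\<epsilon> * G) powr \<alpha> * G)"
          using h2 \<epsilon> by (intro mult_left_mono) auto
        finally show ?thesis unfolding w'eq[symmetric] y_def[symmetric] a_def[symmetric] g_def[symmetric]
          by (simp add: algebra_simps)
      qed
      have "(\<integral>\<zeta>. \<phi> (snd \<zeta>) (w' \<bullet> \<Phi> (fst \<zeta>)) - \<phi> (snd \<zeta>) (wH \<bullet> \<Phi> (fst \<zeta>))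
                 - \<epsilon> * (\<phi>' (snd \<zeta>) (wH \<bullet> \<Phi> (fst \<zeta>)) * (v \<bullet> \<Phi> (fst \<zeta>))) \<partial>\<rho>)
            \<le> (\<integral>\<zeta>. \<epsilon> * (L * (\<epsilon> * G) powr \<alpha> * G) \<partial>\<rho>)"
        by (rule integral_mono) (auto intro!: Bochner_Integration.integrable_diff i\<phi> iprod pt)
      also have "\<dots> = \<epsilon> * (L * (\<epsilon> * G) powr \<alpha> * G)" by (rule intc)
      also have "(\<integral>\<zeta>. \<phi> (snd \<zeta>) (w' \<bullet> \<Phi> (fst \<zeta>)) - \<phi> (snd \<zeta>) (wH \<bullet> \<Phi> (fst \<zeta>))
                 - \<epsilon> * (\<phi>' (snd \<zeta>) (wH \<bullet> \<Phi> (fst \<zeta>)) * (v \<bullet> \<Phi> (fst \<zeta>))) \<partial>\<rho>)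
            = gen_err \<rho> \<phi> (\<lambda>x. w' \<bullet> \<Phi> x) - gen_err \<rho> \<phi> (\<lambda>x. wH \<bullet> \<Phi> x) - \<epsilon> * c"
        unfolding gen_err_def c_def
        by (simp add: Bochner_Integration.integral_diff Bochner_Integration.integrable_diff i\<phi> iprod)
      finally have "gen_err \<rho> \<phi> (\<lambda>x. w' \<bullet> \<Phi> x) - gen_err \<rho> \<phi> (\<lambda>x. wH \<bullet> \<Phi> x) - \<epsilon> * c
          \<le> \<epsilon> * (L * (\<epsilon> * G) powr \<alpha> * G)" .
      moreover have "gen_err \<rho> \<phi> (\<lambda>x. wH \<bullet> \<Phi> x) \<le> gen_err \<rho> \<phi> (\<lambda>x. w' \<bullet> \<Phi> x)" by (rule fH_min)
      ultimately have "\<epsilon> * (- c) \<le> \<epsilon> * (L * (\<epsilon> * G) powr \<alpha> * G)" by (simp add: algebra_simps)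
      then show ?thesis using \<epsilon> by (rule mult_left_le_imp_le)
    qed
    have lim: "((\<lambda>\<epsilon>. L * (\<epsilon> * G) powr \<alpha> * G) \<longlongrightarrow> L * (0 * G) powr \<alpha> * G) (at_right 0)"
      using \<alpha> G0 by (intro tendsto_intros tendsto_powr') (auto intro!: eventually_at_rightI[of 0 1])
    have "- c \<le> L * (0 * G) powr \<alpha> * G"
      by (rule tendsto_le[OF _ lim tendsto_const]) (auto intro!: eventually_at_rightI[of 0 1] key)
    then show ?thesis unfolding c_def by simp
  qed
  have orth: "(\<integral>\<zeta>. \<phi>' (snd \<zeta>) (wH \<bullet> \<Phi> (fst \<zeta>)) * (v \<bullet> \<Phi> (fst \<zeta>)) \<partial>\<rho>) = 0" for v
  proof -
    have "0 \<le> (\<integral>\<zeta>. \<phi>' (snd \<zeta>) (wH \<bullet> \<Phi> (fst \<zeta>)) * ((- v) \<bullet> \<Phi> (fst \<zeta>)) \<partial>\<rho>)" by (rule ge)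
    also have "\<dots> = - (\<integral>\<zeta>. \<phi>' (snd \<zeta>) (wH \<bullet> \<Phi> (fst \<zeta>)) * (v \<bullet> \<Phi> (fst \<zeta>)) \<partial>\<rho>)"
      by (simp add: inner_minus_left)
    finally show ?thesis using ge[of v] by simp
  qed
  define W where "W = ogdw \<Phi> \<phi>' \<eta> z t"
  have zX: "fst (z i) \<in> X" for i using z_in[of i] by (simp add: mem_Times_iff)
  have ft: "ogd K \<phi>' \<eta> z t x = W \<bullet> \<Phi> x" if "x \<in> X" for x
    unfolding W_def by (rule ogd_rep[OF K_feat zX that])
  define c1 where "c1 = 2 powr \<beta> * L powr (1 / \<alpha>) * (1 + \<beta>)"
  define c2 where "c2 = 2 powr \<beta> * (1 - \<alpha> * \<beta>) / (1 + \<alpha>)"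
  have ptw: "\<bar>\<phi>' (snd \<zeta>) (W \<bullet> \<Phi> (fst \<zeta>))\<bar> powr (1 + \<beta>)
      \<le> c1 * (\<phi> (snd \<zeta>) (W \<bullet> \<Phi> (fst \<zeta>)) - \<phi> (snd \<zeta>) (wH \<bullet> \<Phi> (fst \<zeta>))
               - \<phi>' (snd \<zeta>) (wH \<bullet> \<Phi> (fst \<zeta>)) * ((W - wH) \<bullet> \<Phi> (fst \<zeta>)))
        + c2 + 2 powr \<beta> * \<bar>\<phi>' (snd \<zeta>) (wH \<bullet> \<Phi> (fst \<zeta>))\<bar> powr (1 + \<beta>)" if z: "\<zeta> \<in> space \<rho>" for \<zeta>
    using pointwise[OF \<phi>_convex[OF spY[OF z]] \<phi>_deriv[OF spY[OF z]] hoelder[OF spY[OF z]] \<alpha> L \<beta>,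
        of "W \<bullet> \<Phi> (fst \<zeta>)" "wH \<bullet> \<Phi> (fst \<zeta>)"]
    unfolding c1_def c2_def by (simp add: inner_diff_left)
  have lhs: "(\<integral>\<zeta>. \<bar>\<phi>' (snd \<zeta>) (ogd K \<phi>' \<eta> z t (fst \<zeta>))\<bar> powr (1 + \<beta>) \<partial>\<rho>)
      = (\<integral>\<zeta>. \<bar>\<phi>' (snd \<zeta>) (W \<bullet> \<Phi> (fst \<zeta>))\<bar> powr (1 + \<beta>) \<partial>\<rho>)"
    by (rule Bochner_Integration.integral_cong[OF refl]) (simp add: ft[OF spX])
  have gW: "gen_err \<rho> \<phi> (ogd K \<phi>' \<eta> z t) = (\<integral>\<zeta>. \<phi> (snd \<zeta>) (W \<bullet> \<Phi> (fst \<zeta>)) \<partial>\<rho>)"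
    unfolding gen_err_def
    by (rule Bochner_Integration.integral_cong[OF refl]) (simp add: ft[OF spX])
  have "(\<integral>\<zeta>. \<bar>\<phi>' (snd \<zeta>) (W \<bullet> \<Phi> (fst \<zeta>))\<bar> powr (1 + \<beta>) \<partial>\<rho>)
      \<le> (\<integral>\<zeta>. c1 * (\<phi> (snd \<zeta>) (W \<bullet> \<Phi> (fst \<zeta>)) - \<phi> (snd \<zeta>) (wH \<bullet> \<Phi> (fst \<zeta>))
               - \<phi>' (snd \<zeta>) (wH \<bullet> \<Phi> (fst \<zeta>)) * ((W - wH) \<bullet> \<Phi> (fst \<zeta>)))
        + c2 + 2 powr \<beta> * \<bar>\<phi>' (snd \<zeta>) (wH \<bullet> \<Phi> (fst \<zeta>))\<bar> powr (1 + \<beta>) \<partial>\<rho>)"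
    by (rule integral_mono) (auto intro!: Bochner_Integration.integrable_diff Bochner_Integration.integrable_add
        integrable_mult_right i\<phi> iprod ipw ptw)
  also have "\<dots> = c1 * ((\<integral>\<zeta>. \<phi> (snd \<zeta>) (W \<bullet> \<Phi> (fst \<zeta>)) \<partial>\<rho>) - (\<integral>\<zeta>. \<phi> (snd \<zeta>) (wH \<bullet> \<Phi> (fst \<zeta>)) \<partial>\<rho>)
          - (\<integral>\<zeta>. \<phi>' (snd \<zeta>) (wH \<bullet> \<Phi> (fst \<zeta>)) * ((W - wH) \<bullet> \<Phi> (fst \<zeta>)) \<partial>\<rho>))
        + c2 + 2 powr \<beta> * (\<integral>\<zeta>. \<bar>\<phi>' (snd \<zeta>) (wH \<bullet> \<Phi> (fst \<zeta>))\<bar> powr (1 + \<beta>) \<partial>\<rho>)"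
    by (simp add: Bochner_Integration.integral_add Bochner_Integration.integral_diff intc
        Bochner_Integration.integrable_diff Bochner_Integration.integrable_add integrable_mult_right i\<phi> iprod ipw prob_space)
  finally show ?thesis
    unfolding lhs gW orth c1_def c2_def by (simp add: gen_err_def)
qed

end
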